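(* Let $\mathbb F$ be a field and define $P_n:=z^2\bigl(y\,\mathrm{HC}_n+y^2\,\mathrm{HC}_n^2\bigr)$, where $y,z$ are variables distinct from the variables of $\mathrm{HC}_n$. Then the $\mathsf p$-family $(P)=(P_n)_{n\in\mathbb N}$ does not lie in $\mathrm{VNPC}(\le_{\mathsf p})$.
   Context: A $\mathsf p$-family $(f)=(f_n)_{n\in\mathbb N}$ is a sequence of multivariate polynomials over $\mathbb F$ whose number of variables and degree are polynomially bounded in $n$. $f\le g$ (projection) means $f=g(\alpha_1,\dots,\alpha_M)$ where each $\alpha_i$ is a variable of $f$ or an element of $\mathbb F$; $(f)\le_{\mathsf p}(g)$ if there is a polynomially bounded $t$ with $f_n\le g_{t(n)}$ for all $n$. $\mathrm{HC}_n=\sum_{\pi}\prod_{i=1}^n x_{i,\pi(i)}$, summing over permutations $\pi$ of $\{1,\dots,n\}$ that are $n$-cycles. $\mathrm{VNP}$ is the set of $\mathsf p$-families $(f)$ with $(f)\le_{\mathsf p}(\mathrm{HC})$, and $\mathrm{VNPC}(\le_{\mathsf p})=\{(f)\in\mathrm{VNP}:(\mathrm{HC})\le_{\mathsf p}(f)\}$. *)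

theory Defs
  imports "HOL-Library.Poly_Mapping" "HOL-Combinatorics.Permutations" "HOL-Library.Nat_Bijection"
begin

type_synonym 'a mpoly = "(nat \<Rightarrow>\<^sub>0 nat) \<Rightarrow>\<^sub>0 'a"

definition Var :: "nat \<Rightarrow> 'a::comm_ring_1 mpoly" where
  "Var i = Poly_Mapping.single (Poly_Mapping.single i 1) 1"

definition Const :: "'a::comm_ring_1 \<Rightarrow> 'a mpoly" where
  "Const c = Poly_Mapping.single 0 c"

definition mvars :: "'a::comm_ring_1 mpoly \<Rightarrow> nat set" where
  "mvars p = (\<Union>m \<in> Poly_Mapping.keys p. Poly_Mapping.keys m)"

definition nvars :: "'a::comm_ring_1 mpoly \<Rightarrow> nat" where
  "nvars p = card (mvars p)"

definition tdeg :: "'a::comm_ring_1 mpoly \<Rightarrow> nat" where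
  "tdeg p = Max (insert 0 ((\<lambda>m. sum (Poly_Mapping.lookup m) (Poly_Mapping.keys m)) ` Poly_Mapping.keys p))"

definition subst :: "(nat \<Rightarrow> 'a::comm_ring_1 mpoly) \<Rightarrow> 'a mpoly \<Rightarrow> 'a mpoly" where
  "subst \<sigma> g = (\<Sum>m \<in> Poly_Mapping.keys g.
      Const (Poly_Mapping.lookup g m) * (\<Prod>v \<in> Poly_Mapping.keys m. \<sigma> v ^ Poly_Mapping.lookup m v))"

definition proj :: "'a::comm_ring_1 mpoly \<Rightarrow> 'a mpoly \<Rightarrow> bool" where
  "proj f g \<longleftrightarrow> (\<exists>\<sigma>. (\<forall>i. (\<exists>j. \<sigma> i = Var j) \<or> (\<exists>c. \<sigma> i = Const c)) \<and> f = subst \<sigma> g)"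

definition polybounded :: "(nat \<Rightarrow> nat) \<Rightarrow> bool" where
  "polybounded t \<longleftrightarrow> (\<exists>c. \<forall>n. t n \<le> c * (n + 1) ^ c)"

definition pfamily :: "(nat \<Rightarrow> 'a::comm_ring_1 mpoly) \<Rightarrow> bool" where
  "pfamily f \<longleftrightarrow> polybounded (\<lambda>n. nvars (f n)) \<and> polybounded (\<lambda>n. tdeg (f n))"

definition p_reduces :: "(nat \<Rightarrow> 'a::comm_ring_1 mpoly) \<Rightarrow> (nat \<Rightarrow> 'a mpoly) \<Rightarrow> bool" where
  "p_reduces f g \<longleftrightarrow> (\<exists>t. polybounded t \<and> (\<forall>n. proj (f n) (g (t n))))"

definition is_ncycle :: "nat \<Rightarrow> (nat \<Rightarrow> nat) \<Rightarrow> bool" where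
  "is_ncycle n \<pi> \<longleftrightarrow> \<pi> permutes {1..n} \<and> (\<forall>i\<in>{1..n}. \<forall>j\<in>{1..n}. \<exists>k. (\<pi> ^^ k) i = j)"

text \<open>Variable x_{i,j} of HC is encoded as variable number prod_encode(i,j)+2; variables 0 and 1
  are reserved (used for y and z below).\<close>
definition xvar :: "nat \<Rightarrow> nat \<Rightarrow> nat" where
  "xvar i j = prod_encode (i, j) + 2"

definition HC :: "nat \<Rightarrow> 'a::comm_ring_1 mpoly" where
  "HC n = (\<Sum>\<pi> \<in> {\<pi>. is_ncycle n \<pi>}. \<Prod>i = 1..n. Var (xvar i (\<pi> i)))"

definition VNP :: "(nat \<Rightarrow> 'a::comm_ring_1 mpoly) set" where
  "VNP = {f. pfamily f \<and> p_reduces f HC}"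

definition VNPC :: "(nat \<Rightarrow> 'a::comm_ring_1 mpoly) set" where
  "VNPC = {f \<in> VNP. p_reduces HC f}"

text \<open>y = Var 0, z = Var 1.\<close>
definition Pfam :: "nat \<Rightarrow> 'a::comm_ring_1 mpoly" where
  "Pfam n = Var 1 ^ 2 * (Var 0 * HC n + Var 0 ^ 2 * HC n ^ 2)"

end

theory Submission
  imports Defs "HOL-Computational_Algebra.Polynomial"
begin

definition mon :: "(nat \<Rightarrow> 'b::comm_semiring_1) \<Rightarrow> (nat \<Rightarrow>\<^sub>0 nat) \<Rightarrow> 'b" where
  "mon \<rho> m = (\<Prod>v\<in>Poly_Mapping.keys m. \<rho> v ^ Poly_Mapping.lookup m v)"

definition ev :: "(nat \<Rightarrow> 'a::comm_ring_1 poly) \<Rightarrow> 'a mpoly \<Rightarrow> 'a poly" where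
  "ev \<rho> p = (\<Sum>m\<in>Poly_Mapping.keys p. [:Poly_Mapping.lookup p m:] * mon \<rho> m)"

lemma mon_superset:
  assumes "finite S" "Poly_Mapping.keys m \<subseteq> S"
  shows "mon \<rho> m = (\<Prod>v\<in>S. \<rho> v ^ Poly_Mapping.lookup m v)"
  unfolding mon_def
  by (rule prod.mono_neutral_left) (use assms in \<open>auto simp: in_keys_iff\<close>)

lemma mon_add: "mon \<rho> (m + n) = mon \<rho> m * mon \<rho> n"
proof -
  let ?S = "Poly_Mapping.keys m \<union> Poly_Mapping.keys n"
  have "mon \<rho> (m + n) = (\<Prod>v\<in>?S. \<rho> v ^ Poly_Mapping.lookup (m+n) v)"
    by (rule mon_superset) (auto simp: keys_add)
  also have "\<dots> = (\<Prod>v\<in>?S. \<rho> v ^ Poly_Mapping.lookup m v * \<rho> v ^ Poly_Mapping.lookup n v)"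
    by (simp add: lookup_add power_add)
  also have "\<dots> = mon \<rho> m * mon \<rho> n"
    by (simp add: prod.distrib mon_superset[of ?S])
  finally show ?thesis .
qed

lemma mon_zero [simp]: "mon \<rho> 0 = 1"
  by (simp add: mon_def)

lemma ev_superset:
  assumes "finite S" "Poly_Mapping.keys p \<subseteq> S"
  shows "ev \<rho> p = (\<Sum>m\<in>S. [:Poly_Mapping.lookup p m:] * mon \<rho> m)"
  unfolding ev_def
  by (rule sum.mono_neutral_left) (use assms in \<open>auto simp: in_keys_iff\<close>)

lemma ev_add: "ev \<rho> (p + q) = ev \<rho> p + ev \<rho> q"
proof -
  let ?S = "Poly_Mapping.keys p \<union> Poly_Mapping.keys q"
  have "ev \<rho> (p + q) = (\<Sum>m\<in>?S. [:Poly_Mapping.lookup (p+q) m:] * mon \<rho> m)"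
    by (rule ev_superset) (auto simp: keys_add)
  also have "\<dots> = (\<Sum>m\<in>?S. [:Poly_Mapping.lookup p m:] * mon \<rho> m + [:Poly_Mapping.lookup q m:] * mon \<rho> m)"
    by (simp add: lookup_add smult_add_left)
  also have "\<dots> = ev \<rho> p + ev \<rho> q"
    by (simp add: sum.distrib ev_superset[of ?S])
  finally show ?thesis .
qed

lemma ev_zero [simp]: "ev \<rho> 0 = 0"
  by (simp add: ev_def)

lemma ev_sum: "ev \<rho> (sum f I) = (\<Sum>i\<in>I. ev \<rho> (f i))"
  by (induction I rule: infinite_finite_induct) (auto simp: ev_add)

lemma ev_single: "ev \<rho> (Poly_Mapping.single m c) = [:c:] * mon \<rho> m"
  by (simp add: ev_def)

lemma expansion: "(\<Sum>m\<in>Poly_Mapping.keys p. Poly_Mapping.single m (Poly_Mapping.lookup p m)) = p"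
  by (rule poly_mapping_eqI) (auto simp: lookup_sum lookup_single when_def in_keys_iff)

lemma ev_mult: "ev \<rho> (p * q) = ev \<rho> p * ev \<rho> q"
proof -
  have "p * q = (\<Sum>a\<in>Poly_Mapping.keys p. Poly_Mapping.single a (Poly_Mapping.lookup p a)) *
     (\<Sum>b\<in>Poly_Mapping.keys q. Poly_Mapping.single b (Poly_Mapping.lookup q b))"
    by (simp only: expansion)
  also have "\<dots> = (\<Sum>a\<in>Poly_Mapping.keys p. \<Sum>b\<in>Poly_Mapping.keys q.
       Poly_Mapping.single (a + b) (Poly_Mapping.lookup p a * Poly_Mapping.lookup q b))"
    by (simp add: sum_product mult_single)
  finally have "ev \<rho> (p * q) = (\<Sum>a\<in>Poly_Mapping.keys p. \<Sum>b\<in>Poly_Mapping.keys q.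
       [:Poly_Mapping.lookup p a:] * mon \<rho> a * ([:Poly_Mapping.lookup q b:] * mon \<rho> b))"
    by (simp add: ev_sum ev_single mon_add ac_simps)
  also have "\<dots> = ev \<rho> p * ev \<rho> q"
    by (simp add: ev_def sum_product)
  finally show ?thesis .
qed

lemma ev_one [simp]: "ev \<rho> 1 = 1"
  by (metis ev_single mon_zero mult_1 one_pCons single_one)

lemma ev_power: "ev \<rho> (p ^ n) = ev \<rho> p ^ n"
  by (induction n) (auto simp: ev_mult)

lemma ev_prod: "ev \<rho> (prod f I) = (\<Prod>i\<in>I. ev \<rho> (f i))"
  by (induction I rule: infinite_finite_induct) (auto simp: ev_mult)

lemma ev_Const [simp]: "ev \<rho> (Const c) = [:c:]"
  by (simp add: Const_def ev_single)

lemma ev_Var [simp]: "ev \<rho> (Var i) = \<rho> i"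
  by (simp add: Var_def ev_single mon_def)

lemma ev_subst: "ev \<rho> (subst \<sigma> g) = ev (\<lambda>v. ev \<rho> (\<sigma> v)) g"
proof -
  have "ev \<rho> (subst \<sigma> g) = (\<Sum>m\<in>Poly_Mapping.keys g. [:Poly_Mapping.lookup g m:] *
      (\<Prod>v\<in>Poly_Mapping.keys m. ev \<rho> (\<sigma> v) ^ Poly_Mapping.lookup m v))"
    unfolding subst_def by (simp add: ev_sum ev_mult ev_prod ev_power)
  then show ?thesis by (simp add: ev_def mon_def)
qed

lemma ev_Pfam: "ev \<rho> (Pfam m) = \<rho> 1 ^ 2 * (\<rho> 0 * ev \<rho> (HC m) + \<rho> 0 ^ 2 * ev \<rho> (HC m) ^ 2)"
  by (simp add: Pfam_def ev_mult ev_add ev_power)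

lemma HC_1: "HC 1 = Var (xvar 1 1)"
proof -
  have "{\<pi>. is_ncycle 1 \<pi>} = {id}"
    by (auto simp: is_ncycle_def intro: exI[of _ 0])
  then show ?thesis by (simp add: HC_def)
qed

lemma no_odd:
  fixes A B h :: "'a::field poly"
  shows "[:0, 1:] \<noteq> A ^ 2 * (B * h + B ^ 2 * h ^ 2)"
proof
  assume eq: "[:0, 1:] = A ^ 2 * (B * h + B ^ 2 * h ^ 2)"
  define a where "a = B * h"
  have eq2: "[:0, 1:] = A ^ 2 * a * (1 + a)"
    using eq unfolding a_def by (simp add: algebra_simps power2_eq_square)
  have nz: "A \<noteq> 0" "a \<noteq> 0" "1 + a \<noteq> 0"
    using eq2 by auto
  have d: "degree ([:0, 1:] :: 'a poly) = degree A + degree A + degree a + degree (1 + a)"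
    using nz by (simp add: eq2 degree_mult_eq power2_eq_square)
  show False
  proof (cases "degree a = 0")
    case True
    then have "degree (1 + a) = 0"
      by (metis degree_add_le degree_1 le_zero_eq max_0L)
    then have "1 = degree A + degree A" using d True by simp
    then show ?thesis by presburger
  next
    case False
    then have "degree (1 + a) = degree a"
      by (simp add: degree_add_eq_right)
    then have "1 = degree A + degree A + degree a + degree a" using d by simp
    then show ?thesis by presburger
  qed
qed

theorem lemma3:
  shows "(Pfam :: nat \<Rightarrow> 'a::field mpoly) \<notin> VNPC"
proof
  assume "(Pfam :: nat \<Rightarrow> 'a::field mpoly) \<in> VNPC"
  then obtain t where "\<forall>n. proj (HC n :: 'a mpoly) (Pfam (t n))"
    by (auto simp: VNPC_def p_reduces_def)
  then obtain \<sigma> where s: "(HC 1 :: 'a mpoly) = subst \<sigma> (Pfam (t 1))"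
    by (auto simp: proj_def)
  let ?\<rho> = "\<lambda>_::nat. [:0, 1::'a:]"
  have "ev ?\<rho> (HC 1 :: 'a mpoly) = ev ?\<rho> (subst \<sigma> (Pfam (t 1)))"
    using s by simp
  then have "[:0, 1::'a:] = ev (\<lambda>v. ev ?\<rho> (\<sigma> v)) (Pfam (t 1))"
    using s by (simp only: HC_1 ev_subst ev_Var)
  then show False
    by (simp add: ev_Pfam no_odd)
qed

end
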